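(* Let $i,j\ge 0$ be real numbers with $i+j=1$ and let $\psi$ be an approximating function with $\sum_{r=1}^\infty\psi(r)=\infty$. Then for Lebesgue-almost every irrational vector $\mathbf{x}\in[0,1]^2$ we have $\mu\big(\mathbf{W}^{\mathbf{x}}_{(i,j)}(\psi)\big)=1$.
   Context: $\|\cdot\|$ denotes the distance to the nearest integer. Convention: if $i=0$ then $\|y\|^{1/i}:=0$ (and likewise for $j$). A vector $\mathbf{x}=(x_1,x_2)$ is irrational if $1,x_1,x_2$ are linearly independent over $\mathbb{Q}$. $\mu$ denotes two-dimensional Lebesgue measure on $[0,1]^2$. An approximating function is a strictly positive non-increasing map $\psi:\mathbb{N}\to\mathbb{R}$. For an approximating function $\psi$ and irrational $\mathbf{x}\in[0,1]^2$, $\mathbf{W}^{\mathbf{x}}_{(i,j)}(\psi)$ is the set of $\boldsymbol\gamma=(\gamma_1,\gamma_2)\in[0,1]^2$ such that $\max\{\|qx_1-\gamma_1\|^{1/i},\|qx_2-\gamma_2\|^{1/j}\}\le\psi(|q|)$ for infinitely many nonzero integers $q$. *)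

theory Defs
  imports "HOL-Analysis.Analysis"
begin

definition dist_int :: "real \<Rightarrow> real" where
  "dist_int y = \<bar>y - of_int (round y)\<bar>"

text \<open>The quantity \<open>\<parallel>y\<parallel>^(1/i)\<close>, with the convention that it is 0 when i = 0.\<close>
definition wpow :: "real \<Rightarrow> real \<Rightarrow> real" where
  "wpow y i = (if i = 0 then 0 else dist_int y powr (1 / i))"

definition irrational_vec :: "real \<times> real \<Rightarrow> bool" where
  "irrational_vec x \<longleftrightarrow>
     (\<forall>a b c :: rat. of_rat a + of_rat b * fst x + of_rat c * snd x = 0 \<longrightarrow>
        a = 0 \<and> b = 0 \<and> c = 0)"

definition approx_fun :: "(nat \<Rightarrow> real) \<Rightarrow> bool" where
  "approx_fun \<psi> \<longleftrightarrow> (\<forall>n\<ge>1. \<psi> n > 0) \<and> (\<forall>m n. 1 \<le> m \<longrightarrow> m \<le> n \<longrightarrow> \<psi> n \<le> \<psi> m)"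

definition W_set :: "real \<times> real \<Rightarrow> real \<Rightarrow> real \<Rightarrow> (nat \<Rightarrow> real) \<Rightarrow> (real \<times> real) set" where
  "W_set x i j \<psi> = {\<gamma> \<in> {0..1} \<times> {0..1}.
     infinite {q :: int. q \<noteq> 0 \<and>
       max (wpow (of_int q * fst x - fst \<gamma>) i) (wpow (of_int q * snd x - snd \<gamma>) j)
         \<le> \<psi> (nat \<bar>q\<bar>)}}"

end

theory Submission
  imports Defs "HOL-Probability.Probability_Measure"
begin


lemma dist_int_le: "dist_int y \<le> \<bar>y - of_int n\<bar>"
  unfolding dist_int_def by (rule round_diff_minimal)

lemma dist_int_nonneg: "dist_int y \<ge> 0"
  unfolding dist_int_def by simp

lemma dist_int_half: "dist_int y \<le> 1/2"
  unfolding dist_int_def using of_int_round_abs_le[of y] by linarith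

lemma dist_int_le_iff: "dist_int y \<le> a \<longleftrightarrow> (\<exists>n::int. \<bar>y - of_int n\<bar> \<le> a)"
  using dist_int_le[of y] unfolding dist_int_def by (meson order_trans)

lemma dist_int_shift: "dist_int (y + of_int n) = dist_int y"
proof (rule antisym)
  show "dist_int (y + of_int n) \<le> dist_int y"
    using dist_int_le[of "y + of_int n" "round y + n"] unfolding dist_int_def by simp
  show "dist_int y \<le> dist_int (y + of_int n)"
    using dist_int_le[of y "round (y + of_int n) - n"] unfolding dist_int_def by simp
qed

lemma dist_int_minus: "dist_int (- y) = dist_int y"
proof (rule antisym)
  show "dist_int (- y) \<le> dist_int y"
    using dist_int_le[of "- y" "- round y"] unfolding dist_int_def by simp
  show "dist_int y \<le> dist_int (- y)"
    using dist_int_le[of y "- round (- y)"] unfolding dist_int_def by simp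
qed

lemma dist_int_measurable[measurable]: "dist_int \<in> borel_measurable borel"
proof -
  have eq: "dist_int = (\<lambda>y. \<bar>y - real_of_int \<lfloor>y + 1/2\<rfloor>\<bar>)"
    by (auto simp: dist_int_def round_def fun_eq_iff)
  show ?thesis unfolding eq by measurable
qed


lemma lborel_shift:
  fixes f :: "real \<Rightarrow> ennreal"
  assumes [measurable]: "f \<in> borel_measurable borel"
  shows "(\<integral>\<^sup>+x. f (x + c) \<partial>lborel) = (\<integral>\<^sup>+x. f x \<partial>lborel)"
  using nn_integral_real_affine[of f 1 c] by (simp add: add.commute)

definition periodic1 :: "(real \<Rightarrow> 'a) \<Rightarrow> bool" where
  "periodic1 f \<longleftrightarrow> (\<forall>x. f (x + 1) = f x)"

lemma periodic1_nat:
  assumes "periodic1 f" shows "f (x + of_nat n) = f x"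
proof (induction n)
  case (Suc n)
  have "f (x + of_nat (Suc n)) = f ((x + of_nat n) + 1)" by (simp add: algebra_simps)
  also have "\<dots> = f (x + of_nat n)" using assms by (simp add: periodic1_def)
  finally show ?case using Suc by simp
qed simp

lemma periodic1_int:
  assumes "periodic1 f" shows "f (x + of_int n) = f x"
proof (cases "n \<ge> 0")
  case True
  then obtain m where "n = int m" by (metis nonneg_int_cases)
  then show ?thesis using periodic1_nat[OF assms] by simp
next
  case False
  then obtain m where m: "n = - int m" by (metis nonpos_int_cases linorder_le_cases)
  have "f ((x - of_nat m) + of_nat m) = f (x - of_nat m)" by (rule periodic1_nat[OF assms])
  then show ?thesis using m by simp
qed

lemma shift_periodic:
  fixes f :: "real \<Rightarrow> ennreal"
  assumes [measurable]: "f \<in> borel_measurable borel" and per: "periodic1 f"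
  shows "(\<integral>\<^sup>+\<gamma>. indicator {0..<1} \<gamma> * f (\<gamma> + s) \<partial>lborel)
       = (\<integral>\<^sup>+\<gamma>. indicator {0..<1} \<gamma> * f \<gamma> \<partial>lborel)"
proof -
  define n where "n = \<lfloor>s\<rfloor>"
  define \<theta> where "\<theta> = s - of_int n"
  have th0: "0 \<le> \<theta>" and th1: "\<theta> < 1"
    unfolding \<theta>_def n_def by (simp_all add: floor_less_cancel)
  have fs: "f (\<gamma> + s) = f (\<gamma> + \<theta>)" for \<gamma>
    using periodic1_int[OF per, of "\<gamma> + \<theta>" n] by (simp add: \<theta>_def)
  have "(\<integral>\<^sup>+\<gamma>. indicator {0..<1} \<gamma> * f (\<gamma> + s) \<partial>lborel)
      = (\<integral>\<^sup>+\<gamma>. indicator {0..<1} ((\<gamma> + \<theta>) - \<theta>) * f (\<gamma> + \<theta>) \<partial>lborel)"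
    by (simp add: fs)
  also have "\<dots> = (\<integral>\<^sup>+y. indicator {0..<1} (y - \<theta>) * f y \<partial>lborel)"
    by (rule lborel_shift[where f = "\<lambda>y. indicator {0..<1} (y - \<theta>) * f y"]) measurable
  also have "\<dots> = (\<integral>\<^sup>+y. indicator {\<theta>..<1} y * f y + indicator {1..<1+\<theta>} y * f y \<partial>lborel)"
    using th0 th1 by (intro nn_integral_cong) (auto simp: indicator_def)
  also have "\<dots> = (\<integral>\<^sup>+y. indicator {\<theta>..<1} y * f y \<partial>lborel) + (\<integral>\<^sup>+y. indicator {1..<1+\<theta>} y * f y \<partial>lborel)"
    by (rule nn_integral_add) measurable
  also have "(\<integral>\<^sup>+y. indicator {1..<1+\<theta>} y * f y \<partial>lborel)
      = (\<integral>\<^sup>+y. indicator {1..<1+\<theta>} (y + 1) * f (y + 1) \<partial>lborel)"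
    by (rule lborel_shift[symmetric]) measurable
  also have "\<dots> = (\<integral>\<^sup>+y. indicator {0..<\<theta>} y * f y \<partial>lborel)"
    using per by (intro nn_integral_cong) (auto simp: indicator_def periodic1_def)
  also have "(\<integral>\<^sup>+y. indicator {\<theta>..<1} y * f y \<partial>lborel) + (\<integral>\<^sup>+y. indicator {0..<\<theta>} y * f y \<partial>lborel)
      = (\<integral>\<^sup>+y. indicator {\<theta>..<1} y * f y + indicator {0..<\<theta>} y * f y \<partial>lborel)"
    by (rule nn_integral_add[symmetric]) measurable
  also have "\<dots> = (\<integral>\<^sup>+\<gamma>. indicator {0..<1} \<gamma> * f \<gamma> \<partial>lborel)"
    using th0 th1 by (intro nn_integral_cong) (auto simp: indicator_def)
  finally show ?thesis .
qed

lemma sum_periodic: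
  fixes H :: "real \<Rightarrow> ennreal"
  assumes [measurable]: "H \<in> borel_measurable borel" and per: "periodic1 H"
  shows "(\<integral>\<^sup>+x. indicator {0..<real n} x * H x \<partial>lborel)
       = of_nat n * (\<integral>\<^sup>+x. indicator {0..<1} x * H x \<partial>lborel)"
proof (induction n)
  case 0
  then show ?case by simp
next
  case (Suc n)
  have "(\<integral>\<^sup>+x. indicator {0..<real (Suc n)} x * H x \<partial>lborel)
      = (\<integral>\<^sup>+x. indicator {0..<real n} x * H x + indicator {real n..<real n + 1} x * H x \<partial>lborel)"
    by (intro nn_integral_cong) (auto simp: indicator_def)
  also have "\<dots> = (\<integral>\<^sup>+x. indicator {0..<real n} x * H x \<partial>lborel) + (\<integral>\<^sup>+x. indicator {real n..<real n + 1} x * H x \<partial>lborel)"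
    by (rule nn_integral_add) measurable
  also have "(\<integral>\<^sup>+x. indicator {real n..<real n + 1} x * H x \<partial>lborel)
      = (\<integral>\<^sup>+x. indicator {real n..<real n + 1} (x + real n) * H (x + real n) \<partial>lborel)"
    by (rule lborel_shift[symmetric]) measurable
  also have "\<dots> = (\<integral>\<^sup>+x. indicator {0..<1} x * H x \<partial>lborel)"
    using periodic1_nat[OF per] by (intro nn_integral_cong) (auto simp: indicator_def)
  finally show ?case using Suc by (simp add: distrib_right)
qed

lemma scale_periodic:
  fixes H :: "real \<Rightarrow> ennreal"
  assumes [measurable]: "H \<in> borel_measurable borel" and per: "periodic1 H" and k: "k \<ge> 1"
  shows "(\<integral>\<^sup>+x. indicator {0..<1} x * H (real k * x) \<partial>lborel)
       = (\<integral>\<^sup>+x. indicator {0..<1} x * H x \<partial>lborel)"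
proof -
  have kpos: "real k > 0" using k by simp
  have "(\<integral>\<^sup>+x. indicator {0..<1} x * H (real k * x) \<partial>lborel)
     = ennreal \<bar>1 / real k\<bar> * (\<integral>\<^sup>+x. indicator {0..<1} (0 + (1 / real k) * x) * H (real k * (0 + (1 / real k) * x)) \<partial>lborel)"
    by (rule nn_integral_real_affine) (use kpos in auto)
  also have "(\<integral>\<^sup>+x. indicator {0..<1} (0 + (1 / real k) * x) * H (real k * (0 + (1 / real k) * x)) \<partial>lborel)
      = (\<integral>\<^sup>+x. indicator {0..<real k} x * H x \<partial>lborel)"
    using kpos by (intro nn_integral_cong) (auto simp: indicator_def field_simps)
  also have "\<dots> = of_nat k * (\<integral>\<^sup>+x. indicator {0..<1} x * H x \<partial>lborel)"
    by (rule sum_periodic) fact+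
  also have "ennreal \<bar>1 / real k\<bar> * (of_nat k * (\<integral>\<^sup>+x. indicator {0..<1} x * H x \<partial>lborel))
     = (ennreal (1 / real k) * of_nat k) * (\<integral>\<^sup>+x. indicator {0..<1} x * H x \<partial>lborel)"
    by (simp add: mult.assoc)
  also have "ennreal (1 / real k) * of_nat k = 1"
    using kpos by (simp add: ennreal_of_nat_eq_real_of_nat ennreal_mult[symmetric])
  finally show ?thesis by simp
qed


definition ee :: "real \<Rightarrow> real \<Rightarrow> ennreal" where
  "ee a t = indicator {t. dist_int t \<le> a} t"

lemma ee_measurable[measurable]: "ee a \<in> borel_measurable borel"
  unfolding ee_def by measurable

lemma ee_measurable'[measurable (raw)]:
  "f \<in> borel_measurable M \<Longrightarrow> (\<lambda>x. ee a (f x)) \<in> borel_measurable M"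
  by (rule measurable_compose[OF _ ee_measurable])

lemma ee_shift: "ee a (t + of_int n) = ee a t"
  unfolding ee_def by (simp add: dist_int_shift indicator_def)

lemma ee_minus: "ee a (- t) = ee a t"
  unfolding ee_def by (simp add: dist_int_minus indicator_def)

lemma ee_periodic: "periodic1 (ee a)"
  unfolding periodic1_def using ee_shift[of a _ 1] by simp

lemma ee_le1: "ee a t \<le> 1"
  unfolding ee_def by (simp add: indicator_def)

lemma closed_to_open:
  fixes F :: "real \<Rightarrow> ennreal"
  shows "(\<integral>\<^sup>+x. indicator {0..1} x * F x \<partial>lborel) = (\<integral>\<^sup>+x. indicator {0..<1} x * F x \<partial>lborel)"
  by (intro nn_integral_cong_AE) (use AE_lborel_singleton[of "1::real"] in \<open>auto elim!: eventually_mono simp: indicator_def\<close>)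

lemma ee_basic:
  assumes a0: "0 \<le> a" and a1: "a \<le> 1/2"
  shows "(\<integral>\<^sup>+\<gamma>. indicator {0..<1} \<gamma> * ee a \<gamma> \<partial>lborel) = ennreal (2 * a)"
proof -
  have set: "{0..<1} \<inter> {t. dist_int t \<le> a} = {0..<1} - {a<..<1-a}"
  proof (intro set_eqI iffI)
    fix t assume t: "t \<in> {0..<1} \<inter> {t. dist_int t \<le> a}"
    then obtain n :: int where n: "\<bar>t - of_int n\<bar> \<le> a" by (auto simp: dist_int_le_iff)
    have "n = 0 \<or> n = 1"
    proof -
      have "of_int n > (-1::real)" using t n a1 by (auto simp: abs_le_iff)
      moreover have "of_int n < (2::real)" using t n a1 by (auto simp: abs_le_iff)
      ultimately have "n > -1" "n < 2" by linarith+
      then show ?thesis by auto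
    qed
    then show "t \<in> {0..<1} - {a<..<1-a}" using t n by auto
  next
    fix t assume t: "t \<in> {0..<1} - {a<..<1-a}"
    then have "\<bar>t - of_int 0\<bar> \<le> a \<or> \<bar>t - of_int 1\<bar> \<le> a" by auto
    then have "\<exists>n::int. \<bar>t - of_int n\<bar> \<le> a" by blast
    then show "t \<in> {0..<1} \<inter> {t. dist_int t \<le> a}" using t by (simp add: dist_int_le_iff)
  qed
  have "(\<integral>\<^sup>+\<gamma>. indicator {0..<1} \<gamma> * ee a \<gamma> \<partial>lborel)
      = (\<integral>\<^sup>+\<gamma>. indicator ({0..<1} \<inter> {t. dist_int t \<le> a}) \<gamma> \<partial>lborel)"
    by (intro nn_integral_cong) (auto simp: ee_def indicator_def)
  also have "\<dots> = emeasure lborel ({0..<1} - {a<..<1-a})"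
    by (simp add: set)
  also have "\<dots> = emeasure lborel {0..<(1::real)} - emeasure lborel {a<..<1-a}"
    using a0 a1 by (intro emeasure_Diff) auto
  also have "\<dots> = ennreal 1 - ennreal (1 - a - a)"
    using a0 a1 by simp
  also have "\<dots> = ennreal (2 * a)"
    using a0 a1 by (subst ennreal_minus) auto
  finally show ?thesis .
qed

lemma G1_inner:
  assumes a0: "0 \<le> a" and a1: "a \<le> 1/2"
  shows "(\<integral>\<^sup>+\<gamma>. indicator {0..1} \<gamma> * ee a (c - \<gamma>) \<partial>lborel) = ennreal (2 * a)"
proof -
  have "(\<integral>\<^sup>+\<gamma>. indicator {0..1} \<gamma> * ee a (c - \<gamma>) \<partial>lborel)
      = (\<integral>\<^sup>+\<gamma>. indicator {0..<1} \<gamma> * ee a (\<gamma> + (- c)) \<partial>lborel)"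
    using ee_minus[of a "\<gamma> - c" for \<gamma>] by (subst closed_to_open) simp
  also have "\<dots> = (\<integral>\<^sup>+\<gamma>. indicator {0..<1} \<gamma> * ee a \<gamma> \<partial>lborel)"
    by (rule shift_periodic[OF ee_measurable ee_periodic])
  finally show ?thesis using ee_basic[OF a0 a1] by simp
qed


definition HH :: "real \<Rightarrow> real \<Rightarrow> real \<Rightarrow> ennreal" where
  "HH a b t = (\<integral>\<^sup>+\<gamma>. indicator {0..<1} \<gamma> * (ee a (\<gamma> + t) * ee b \<gamma>) \<partial>lborel)"

lemma HH_measurable[measurable]: "HH a b \<in> borel_measurable borel"
  unfolding HH_def by measurable

lemma HH_periodic: "periodic1 (HH a b)"
  unfolding periodic1_def HH_def
  using ee_shift[of a _ 1] by (simp add: add.assoc[symmetric])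

lemma G2_inner:
  "(\<integral>\<^sup>+\<gamma>. indicator {0..1} \<gamma> * (ee a (u - \<gamma>) * ee b (v - \<gamma>)) \<partial>lborel) = HH a b (v - u)"
proof -
  define h where "h y = ee a (y + (v - u)) * ee b y" for y
  have hm[measurable]: "h \<in> borel_measurable borel" unfolding h_def by measurable
  have hp: "periodic1 h" unfolding h_def periodic1_def
  proof
    fix y
    have "ee a (y + 1 + (v - u)) = ee a ((y + (v - u)) + 1)" by (simp add: algebra_simps)
    also have "\<dots> = ee a (y + (v - u))" using ee_shift[of a _ 1] by simp
    finally show "ee a (y + 1 + (v - u)) * ee b (y + 1) = ee a (y + (v - u)) * ee b y"
      using ee_shift[of b y 1] by simp
  qed
  have "(\<integral>\<^sup>+\<gamma>. indicator {0..1} \<gamma> * (ee a (u - \<gamma>) * ee b (v - \<gamma>)) \<partial>lborel)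
      = (\<integral>\<^sup>+\<gamma>. indicator {0..<1} \<gamma> * h (\<gamma> + (- v)) \<partial>lborel)"
  proof (subst closed_to_open, intro nn_integral_cong)
    fix \<gamma> :: real
    have "ee a (u - \<gamma>) = ee a (\<gamma> + - v + (v - u))" using ee_minus[of a "\<gamma> - u"] by simp
    moreover have "ee b (v - \<gamma>) = ee b (\<gamma> + - v)" using ee_minus[of b "\<gamma> - v"] by simp
    ultimately show "indicator {0..<1} \<gamma> * (ee a (u - \<gamma>) * ee b (v - \<gamma>)) = indicator {0..<1} \<gamma> * h (\<gamma> + - v)"
      by (simp add: h_def)
  qed
  also have "\<dots> = (\<integral>\<^sup>+\<gamma>. indicator {0..<1} \<gamma> * h \<gamma> \<partial>lborel)"
    by (rule shift_periodic[OF hm hp])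
  finally show ?thesis by (simp add: h_def HH_def)
qed

lemma HH_integral:
  assumes "0 \<le> a" "a \<le> 1/2" "0 \<le> b" "b \<le> 1/2"
  shows "(\<integral>\<^sup>+t. indicator {0..<1} t * HH a b t \<partial>lborel) = ennreal (2 * a) * ennreal (2 * b)"
proof -
  have "(\<integral>\<^sup>+t. indicator {0..<1} t * HH a b t \<partial>lborel)
      = (\<integral>\<^sup>+t. \<integral>\<^sup>+\<gamma>. indicator {0..<1} t * (indicator {0..<1} \<gamma> * (ee a (\<gamma> + t) * ee b \<gamma>)) \<partial>lborel \<partial>lborel)"
    unfolding HH_def by (intro nn_integral_cong nn_integral_cmult[symmetric]) measurable
  also have "\<dots> = (\<integral>\<^sup>+\<gamma>. \<integral>\<^sup>+t. indicator {0..<1} t * (indicator {0..<1} \<gamma> * (ee a (\<gamma> + t) * ee b \<gamma>)) \<partial>lborel \<partial>lborel)"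
    by (rule lborel_pair.Fubini'[symmetric]) measurable
  also have "\<dots> = (\<integral>\<^sup>+\<gamma>. (indicator {0..<1} \<gamma> * ee b \<gamma>) * (\<integral>\<^sup>+t. indicator {0..<1} t * ee a (t + \<gamma>) \<partial>lborel) \<partial>lborel)"
    by (intro nn_integral_cong, subst nn_integral_cmult[symmetric]) (auto intro!: nn_integral_cong simp: ac_simps)
  also have "\<dots> = (\<integral>\<^sup>+\<gamma>. (indicator {0..<1} \<gamma> * ee b \<gamma>) * ennreal (2 * a) \<partial>lborel)"
    using shift_periodic[OF ee_measurable ee_periodic, of a] ee_basic[of a] assms
    by (intro nn_integral_cong) simp
  also have "\<dots> = (\<integral>\<^sup>+\<gamma>. indicator {0..<1} \<gamma> * ee b \<gamma> \<partial>lborel) * ennreal (2 * a)"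
    by (rule nn_integral_multc) measurable
  also have "\<dots> = ennreal (2 * a) * ennreal (2 * b)"
    using ee_basic[of b] assms by (simp add: mult.commute)
  finally show ?thesis .
qed

lemma G2:
  fixes Q R :: nat
  assumes QR: "Q < R" and "0 \<le> a" "a \<le> 1/2" "0 \<le> b" "b \<le> 1/2"
  shows "(\<integral>\<^sup>+x. indicator {0..1} x * (\<integral>\<^sup>+\<gamma>. indicator {0..1} \<gamma> * (ee a (real Q * x - \<gamma>) * ee b (real R * x - \<gamma>)) \<partial>lborel) \<partial>lborel)
     = ennreal (2 * a) * ennreal (2 * b)"
proof -
  have "(\<integral>\<^sup>+x. indicator {0..1} x * (\<integral>\<^sup>+\<gamma>. indicator {0..1} \<gamma> * (ee a (real Q * x - \<gamma>) * ee b (real R * x - \<gamma>)) \<partial>lborel) \<partial>lborel)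
      = (\<integral>\<^sup>+x. indicator {0..<1} x * HH a b (real (R - Q) * x) \<partial>lborel)"
    using QR by (subst closed_to_open, simp only: G2_inner) (simp add: of_nat_diff algebra_simps)
  also have "\<dots> = (\<integral>\<^sup>+x. indicator {0..<1} x * HH a b x \<partial>lborel)"
    by (rule scale_periodic[OF HH_measurable HH_periodic]) (use QR in auto)
  finally show ?thesis using HH_integral assms by simp
qed

lemma G1:
  assumes "0 \<le> a" "a \<le> 1/2"
  shows "(\<integral>\<^sup>+x. indicator {0..1} x * (\<integral>\<^sup>+\<gamma>. indicator {0..1} \<gamma> * ee a (q * x - \<gamma>) \<partial>lborel) \<partial>lborel)
     = ennreal (2 * a)"
  using assms by (simp add: G1_inner nn_integral_multc)


lemma borel_measurable_fst_comp[measurable (raw)]: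
  fixes f :: "'z \<Rightarrow> 'a::topological_space \<times> 'b::topological_space"
  assumes "f \<in> borel_measurable M"
  shows "(\<lambda>x. fst (f x)) \<in> borel_measurable M"
proof -
  have "fst \<in> borel_measurable (borel :: ('a \<times> 'b) measure)"
    by (intro borel_measurable_continuous_onI continuous_intros)
  then show ?thesis using assms by (rule measurable_compose[rotated])
qed

lemma borel_measurable_snd_comp[measurable (raw)]:
  fixes f :: "'z \<Rightarrow> 'a::topological_space \<times> 'b::topological_space"
  assumes "f \<in> borel_measurable M"
  shows "(\<lambda>x. snd (f x)) \<in> borel_measurable M"
proof -
  have "snd \<in> borel_measurable (borel :: ('a \<times> 'b) measure)"
    by (intro borel_measurable_continuous_onI continuous_intros)
  then show ?thesis using assms by (rule measurable_compose[rotated])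
qed

lemma int2:
  fixes F :: "'a::euclidean_space \<times> 'b::euclidean_space \<Rightarrow> ennreal"
  assumes [measurable]: "F \<in> borel_measurable borel"
  shows "(\<integral>\<^sup>+z. F z \<partial>lborel) = (\<integral>\<^sup>+a. \<integral>\<^sup>+b. F (a, b) \<partial>lborel \<partial>lborel)"
proof -
  have m: "F \<in> borel_measurable (lborel \<Otimes>\<^sub>M lborel)" by (simp add: lborel_prod)
  show ?thesis using lborel.nn_integral_fst[OF m] by (simp add: lborel_prod)
qed

definition JJ :: "(real \<times> real \<Rightarrow> ennreal) \<Rightarrow> ennreal" where
  "JJ g = (\<integral>\<^sup>+x. indicator {0..1} x * (\<integral>\<^sup>+\<gamma>. indicator {0..1} \<gamma> * g (x, \<gamma>) \<partial>lborel) \<partial>lborel)"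

definition UU :: "(real \<times> real) set" where "UU = {0..1} \<times> {0..1}"

lemma UU_sets[measurable]: "UU \<in> sets borel"
  unfolding UU_def by (intro borel_closed closed_Times) auto

lemma UUUU_sets[measurable]: "UU \<times> UU \<in> sets (borel :: ((real \<times> real) \<times> (real \<times> real)) measure)"
  unfolding UU_def by (intro borel_closed closed_Times) auto

lemma prod4:
  fixes g h :: "real \<times> real \<Rightarrow> ennreal"
  assumes [measurable]: "g \<in> borel_measurable borel" "h \<in> borel_measurable borel"
  shows "(\<integral>\<^sup>+\<omega>. indicator UU (fst \<omega>) * indicator UU (snd \<omega>) * (g (fst (fst \<omega>), fst (snd \<omega>)) * h (snd (fst \<omega>), snd (snd \<omega>))) \<partial>lborel)
     = JJ g * JJ h"
proof -
  define i :: "real \<Rightarrow> ennreal" where "i = indicator {0..1}"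
  have im[measurable]: "i \<in> borel_measurable borel" unfolding i_def by measurable
  define A where "A x1 = (\<integral>\<^sup>+\<gamma>. i \<gamma> * g (x1, \<gamma>) \<partial>lborel)" for x1
  define B where "B x2 = (\<integral>\<^sup>+\<gamma>. i \<gamma> * h (x2, \<gamma>) \<partial>lborel)" for x2
  have Am[measurable]: "A \<in> borel_measurable borel" unfolding A_def by measurable
  have Bm[measurable]: "B \<in> borel_measurable borel" unfolding B_def by measurable
  have ind: "indicator UU (x1, x2) * indicator UU (\<gamma>1, \<gamma>2) = i x1 * i x2 * i \<gamma>1 * i \<gamma>2" for x1 x2 \<gamma>1 \<gamma>2
    by (simp add: UU_def i_def indicator_def)
  have inner: "(\<integral>\<^sup>+\<gamma>1. \<integral>\<^sup>+\<gamma>2. i x1 * i x2 * i \<gamma>1 * i \<gamma>2 * (g (x1, \<gamma>1) * h (x2, \<gamma>2)) \<partial>lborel \<partial>lborel)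
      = (i x1 * A x1) * (i x2 * B x2)" for x1 x2
  proof -
    have "(\<integral>\<^sup>+\<gamma>1. \<integral>\<^sup>+\<gamma>2. i x1 * i x2 * i \<gamma>1 * i \<gamma>2 * (g (x1, \<gamma>1) * h (x2, \<gamma>2)) \<partial>lborel \<partial>lborel)
        = (\<integral>\<^sup>+\<gamma>1. \<integral>\<^sup>+\<gamma>2. (i x1 * i x2 * i \<gamma>1 * g (x1, \<gamma>1)) * (i \<gamma>2 * h (x2, \<gamma>2)) \<partial>lborel \<partial>lborel)"
      by (simp add: ac_simps)
    also have "\<dots> = (\<integral>\<^sup>+\<gamma>1. (i x1 * i x2 * i \<gamma>1 * g (x1, \<gamma>1)) * B x2 \<partial>lborel)"
      unfolding B_def by (intro nn_integral_cong nn_integral_cmult) measurable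
    also have "\<dots> = (\<integral>\<^sup>+\<gamma>1. (i \<gamma>1 * g (x1, \<gamma>1)) * (i x1 * i x2 * B x2) \<partial>lborel)"
      by (simp add: ac_simps)
    also have "\<dots> = A x1 * (i x1 * i x2 * B x2)"
      unfolding A_def by (rule nn_integral_multc) measurable
    finally show ?thesis by (simp add: ac_simps)
  qed
  have "(\<integral>\<^sup>+\<omega>. indicator UU (fst \<omega>) * indicator UU (snd \<omega>) * (g (fst (fst \<omega>), fst (snd \<omega>)) * h (snd (fst \<omega>), snd (snd \<omega>))) \<partial>lborel)
      = (\<integral>\<^sup>+x. \<integral>\<^sup>+\<gamma>. indicator UU x * indicator UU \<gamma> * (g (fst x, fst \<gamma>) * h (snd x, snd \<gamma>)) \<partial>lborel \<partial>lborel)"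
  proof -
    have m: "(\<lambda>\<omega>::(real\<times>real)\<times>(real\<times>real). indicator UU (fst \<omega>) * indicator UU (snd \<omega>) * (g (fst (fst \<omega>), fst (snd \<omega>)) * h (snd (fst \<omega>), snd (snd \<omega>)))) \<in> borel_measurable borel"
      by measurable
    show ?thesis using int2[OF m] by simp
  qed
  also have "\<dots> = (\<integral>\<^sup>+x. \<integral>\<^sup>+\<gamma>1. \<integral>\<^sup>+\<gamma>2. indicator UU x * indicator UU (\<gamma>1, \<gamma>2) * (g (fst x, \<gamma>1) * h (snd x, \<gamma>2)) \<partial>lborel \<partial>lborel \<partial>lborel)"
  proof (intro nn_integral_cong)
    fix x :: "real \<times> real"
    have m: "(\<lambda>\<gamma>::real\<times>real. indicator UU x * indicator UU \<gamma> * (g (fst x, fst \<gamma>) * h (snd x, snd \<gamma>))) \<in> borel_measurable borel"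
      by measurable
    show "(\<integral>\<^sup>+\<gamma>. indicator UU x * indicator UU \<gamma> * (g (fst x, fst \<gamma>) * h (snd x, snd \<gamma>)) \<partial>lborel) = (\<integral>\<^sup>+\<gamma>1. \<integral>\<^sup>+\<gamma>2. indicator UU x * indicator UU (\<gamma>1, \<gamma>2) * (g (fst x, \<gamma>1) * h (snd x, \<gamma>2)) \<partial>lborel \<partial>lborel)"
      using int2[OF m] by simp
  qed
  also have "\<dots> = (\<integral>\<^sup>+x1. \<integral>\<^sup>+x2. \<integral>\<^sup>+\<gamma>1. \<integral>\<^sup>+\<gamma>2. indicator UU (x1, x2) * indicator UU (\<gamma>1, \<gamma>2) * (g (x1, \<gamma>1) * h (x2, \<gamma>2)) \<partial>lborel \<partial>lborel \<partial>lborel \<partial>lborel)"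
  proof -
    have m: "(\<lambda>x::real\<times>real. \<integral>\<^sup>+\<gamma>1. \<integral>\<^sup>+\<gamma>2. indicator UU x * indicator UU (\<gamma>1, \<gamma>2) * (g (fst x, \<gamma>1) * h (snd x, \<gamma>2)) \<partial>lborel \<partial>lborel) \<in> borel_measurable borel"
      by measurable
    show ?thesis using int2[OF m] by simp
  qed
  also have "\<dots> = (\<integral>\<^sup>+x1. \<integral>\<^sup>+x2. (i x1 * A x1) * (i x2 * B x2) \<partial>lborel \<partial>lborel)"
    by (simp only: ind inner)
  also have "\<dots> = (\<integral>\<^sup>+x1. (i x1 * A x1) * JJ h \<partial>lborel)"
    unfolding JJ_def B_def i_def by (intro nn_integral_cong nn_integral_cmult) measurable
  also have "\<dots> = JJ g * JJ h"
    unfolding JJ_def A_def i_def by (rule nn_integral_multc) measurable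
  finally show ?thesis .
qed


context prob_space
begin

lemma PZ:
  fixes A :: "nat \<Rightarrow> 'a set" and F :: "nat set"
  assumes fin: "finite F" and ev: "\<And>q. A q \<in> events"
    and T: "(\<Sum>q\<in>F. prob (A q)) = T" "T > 0"
    and V: "(\<Sum>q\<in>F. \<Sum>r\<in>F. prob (A q \<inter> A r)) \<le> V"
  shows "prob (\<Union>q\<in>F. A q) \<ge> T^2 / V"
proof -
  have ii: "\<And>B. B \<in> events \<Longrightarrow> integrable M (indicator B :: 'a \<Rightarrow> real)"
    by (intro integrable_real_indicator) (auto simp: emeasure_eq_measure)
  define U where "U = (\<Union>q\<in>F. A q)"
  have Uev: "U \<in> events" unfolding U_def using fin ev by auto
  define S where "S \<omega> = (\<Sum>q\<in>F. indicator (A q) \<omega> :: real)" for \<omega>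
  have intS: "integrable M S" unfolding S_def using ev by (intro Bochner_Integration.integrable_sum) (auto intro!: ii)
  have intS2: "integrable M (\<lambda>\<omega>. (\<Sum>q\<in>F. \<Sum>r\<in>F. indicator (A q \<inter> A r) \<omega> :: real))"
    using ev by (intro Bochner_Integration.integrable_sum) (auto intro!: ii)
  have intU: "integrable M (indicator U :: 'a \<Rightarrow> real)" using Uev by (rule ii)
  have S2: "S \<omega> ^ 2 = (\<Sum>q\<in>F. \<Sum>r\<in>F. indicator (A q \<inter> A r) \<omega>)" for \<omega>
    unfolding S_def power2_eq_square sum_product by (simp add: indicator_inter_arith)
  have SU: "S \<omega> * indicator U \<omega> = S \<omega>" for \<omega>
    unfolding S_def U_def by (auto simp: indicator_def intro!: sum.neutral)
  have ES: "integral\<^sup>L M S = T"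
    unfolding S_def using ev T
    by (subst Bochner_Integration.integral_sum) (auto intro!: ii simp: Bochner_Integration.integral_indicator)
  have ES2: "(\<integral>\<omega>. (\<Sum>q\<in>F. \<Sum>r\<in>F. indicator (A q \<inter> A r) \<omega> :: real) \<partial>M) = (\<Sum>q\<in>F. \<Sum>r\<in>F. prob (A q \<inter> A r))"
    using ev ii by (simp add: Bochner_Integration.integral_sum Bochner_Integration.integral_indicator Int_absorb2 sets.Int)
  have EU: "integral\<^sup>L M (indicator U :: 'a \<Rightarrow> real) = prob U"
    using Uev by (simp add: Bochner_Integration.integral_indicator Int_absorb2)
  define c where "c = V / T"
  have Vpos: "V > 0"
  proof -
    have "T^2 \<le> (\<Sum>q\<in>F. \<Sum>r\<in>F. prob (A q \<inter> A r))"
    proof -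
      have "0 \<le> (\<integral>\<omega>. (S \<omega> - T) ^ 2 \<partial>M)" by (intro integral_nonneg_AE) auto
      also have "(\<integral>\<omega>. (S \<omega> - T) ^ 2 \<partial>M) = (\<integral>\<omega>. (\<Sum>q\<in>F. \<Sum>r\<in>F. indicator (A q \<inter> A r) \<omega> :: real) - 2 * T * S \<omega> + T^2 \<partial>M)"
        by (intro Bochner_Integration.integral_cong) (auto simp: power2_diff S2 algebra_simps)
      also have "\<dots> = (\<Sum>q\<in>F. \<Sum>r\<in>F. prob (A q \<inter> A r)) - 2 * T * T + T^2"
        using intS intS2 ES ES2 prob_space by (simp add: algebra_simps)
      finally show ?thesis by (simp add: power2_eq_square)
    qed
    then show ?thesis using V T by (smt (verit) zero_less_power)
  qed
  have "0 \<le> (\<integral>\<omega>. (S \<omega> - c * indicator U \<omega>) ^ 2 \<partial>M)" by (intro integral_nonneg_AE) auto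
  also have "(\<integral>\<omega>. (S \<omega> - c * indicator U \<omega>) ^ 2 \<partial>M)
      = (\<integral>\<omega>. (\<Sum>q\<in>F. \<Sum>r\<in>F. indicator (A q \<inter> A r) \<omega> :: real) - 2 * c * S \<omega> + c^2 * indicator U \<omega> \<partial>M)"
  proof (intro Bochner_Integration.integral_cong refl)
    fix \<omega>
    have "(S \<omega> - c * indicator U \<omega>) ^ 2 = S \<omega> ^ 2 - 2 * c * (S \<omega> * indicator U \<omega>) + c^2 * (indicator U \<omega>)^2"
      by (simp add: power2_diff algebra_simps)
    also have "(indicator U \<omega> :: real)^2 = indicator U \<omega>" by (simp add: indicator_def)
    finally show "(S \<omega> - c * indicator U \<omega>) ^ 2 = (\<Sum>q\<in>F. \<Sum>r\<in>F. indicator (A q \<inter> A r) \<omega> :: real) - 2 * c * S \<omega> + c^2 * indicator U \<omega>"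
      by (simp add: SU S2)
  qed
  also have "\<dots> = (\<Sum>q\<in>F. \<Sum>r\<in>F. prob (A q \<inter> A r)) - 2 * c * T + c^2 * prob U"
    using intS intS2 intU ES ES2 EU by simp
  also have "\<dots> \<le> V - 2 * c * T + c^2 * prob U" using V by simp
  finally have ineq: "0 \<le> V - 2 * c * T + c^2 * prob U" .
  have "V - 2 * c * T + c^2 * prob U = - V + (V/T)^2 * prob U"
    using T by (simp add: c_def field_simps power2_eq_square)
  with ineq have "V \<le> (V/T)^2 * prob U" by simp
  then have "V * T^2 \<le> V^2 * prob U" using T by (simp add: field_simps power2_eq_square)
  then have "T^2 \<le> V * prob U" using Vpos by (simp add: power2_eq_square mult.assoc)
  then show ?thesis using Vpos unfolding U_def by (simp add: field_simps)
qed

lemma BC2: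
  fixes A :: "nat \<Rightarrow> 'a set" and p :: "nat \<Rightarrow> real"
  assumes ev: "\<And>q. A q \<in> events" and pq: "\<And>q. prob (A q) = p q"
    and pqr: "\<And>q r. q \<noteq> r \<Longrightarrow> prob (A q \<inter> A r) = p q * p r"
    and ns: "\<not> summable p"
  shows "prob (\<Union>q\<in>{m..}. A q) = 1"
proof (rule ccontr)
  define P where "P = prob (\<Union>q\<in>{m..}. A q)"
  assume "prob (\<Union>q\<in>{m..}. A q) \<noteq> 1"
  then have P1: "P < 1" using prob_le_1 unfolding P_def by (simp add: order_less_le)
  have P0: "0 \<le> P" unfolding P_def by simp
  have p0: "0 \<le> p q" for q using pq[of q] by (metis measure_nonneg)
  have ns': "\<not> summable (\<lambda>k. p (k + m))" using ns summable_iff_shift[of p m] by simp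
  obtain n where n: "(\<Sum>k<n. p (k + m)) > P / (1 - P)"
  proof (rule ccontr)
    assume "\<not> thesis"
    then have "\<And>n. (\<Sum>k<n. p (k + m)) \<le> P / (1 - P)" using that by (meson not_le)
    then have "summable (\<lambda>k. p (k + m))" by (intro summableI_nonneg_bounded[where x = "P / (1 - P)"]) (auto simp: p0)
    with ns' show False by simp
  qed
  define F where "F = {m..<m+n}"
  define T where "T = (\<Sum>q\<in>F. p q)"
  have TT: "T = (\<Sum>k<n. p (k + m))"
    unfolding T_def F_def using sum.shift_bounds_nat_ivl[of p 0 m n] by (simp add: lessThan_atLeast0 add.commute)
  have Tpos: "T > 0" using n P0 P1 TT by (smt (verit) divide_nonneg_pos)
  have "(\<Sum>q\<in>F. \<Sum>r\<in>F. prob (A q \<inter> A r)) \<le> (\<Sum>q\<in>F. \<Sum>r\<in>F. p q * p r + (if q = r then p q else 0))"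
  proof (intro sum_mono)
    fix q r
    show "prob (A q \<inter> A r) \<le> p q * p r + (if q = r then p q else 0)"
    proof (cases "q = r")
      case True
      then show ?thesis using pq[of q] p0[of q] by simp
    next
      case False
      then show ?thesis using pqr by simp
    qed
  qed
  also have "\<dots> = T * T + T"
    unfolding T_def by (simp add: sum.distrib sum_product F_def)
  finally have V: "(\<Sum>q\<in>F. \<Sum>r\<in>F. prob (A q \<inter> A r)) \<le> T * T + T" .
  have "prob (\<Union>q\<in>F. A q) \<ge> T^2 / (T * T + T)"
    by (rule PZ[OF _ ev _ Tpos V]) (auto simp: F_def T_def pq)
  moreover have "prob (\<Union>q\<in>F. A q) \<le> P"
    unfolding P_def F_def using ev by (intro finite_measure_mono) auto
  moreover have "T^2 / (T * T + T) = T / (T + 1)"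
  proof -
    have "T * T + T > 0" "T + 1 > 0" using Tpos by (auto simp: add_pos_pos)
    then show ?thesis by (subst frac_eq_eq) (auto simp: power2_eq_square algebra_simps)
  qed
  moreover have "T / (T + 1) > P"
  proof -
    have "T > P / (1 - P)" using n TT by simp
    then have "T * (1 - P) > P" using P1 by (simp add: field_simps)
    then show ?thesis using Tpos by (simp add: field_simps)
  qed
  ultimately show False by simp
qed

end


lemma wpow_le:
  assumes i: "0 \<le> i" and ps: "0 < p" and d: "dist_int t \<le> p powr i"
  shows "wpow t i \<le> p"
proof (cases "i = 0")
  case True then show ?thesis using ps by (simp add: wpow_def)
next
  case False
  then have "dist_int t powr (1 / i) \<le> (p powr i) powr (1 / i)"
    using i d by (intro powr_mono2) (auto simp: dist_int_nonneg)
  also have "\<dots> = p" using False ps by (simp add: powr_powr)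
  finally show ?thesis using False by (simp add: wpow_def)
qed

lemma four_ab:
  fixes p i j :: real
  assumes p: "0 < p" and i: "0 \<le> i" and j: "0 \<le> j" and ij: "i + j = 1"
  shows "min 1 p \<le> 4 * min (1/2) (p powr i) * min (1/2) (p powr j)"
proof (cases "p \<ge> 1")
  case True
  then have "p powr i \<ge> 1" "p powr j \<ge> 1" using i j by (auto intro: ge_one_powr_ge_zero)
  then show ?thesis by simp
next
  case False
  define X where "X = p powr i"
  define Y where "Y = p powr j"
  have XY: "X * Y = p" unfolding X_def Y_def using p ij by (simp add: powr_add[symmetric])
  have Xp: "X \<ge> p" unfolding X_def using powr_mono'[of i 1 p] i ij j p False by simp
  have Yp: "Y \<ge> p" unfolding Y_def using powr_mono'[of j 1 p] i ij j p False by simp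
  have X0: "X > 0" "Y > 0" unfolding X_def Y_def using p by auto
  have mp: "min 1 p = p" using False by simp
  show ?thesis
  proof (cases "X \<le> 1/2")
    case X: True
    show ?thesis
    proof (cases "Y \<le> 1/2")
      case True
      then show ?thesis using X XY X0 p by (simp add: mp X_def[symmetric] Y_def[symmetric])
    next
      case False
      then show ?thesis using X Xp p by (simp add: mp X_def[symmetric] Y_def[symmetric])
    qed
  next
    case X: False
    show ?thesis
    proof (cases "Y \<le> 1/2")
      case True
      then show ?thesis using X Yp p by (simp add: mp X_def[symmetric] Y_def[symmetric])
    next
      case False
      then show ?thesis using X False p \<open>\<not> p \<ge> 1\<close> by (simp add: mp X_def[symmetric] Y_def[symmetric])
    qed
  qed
qed

lemma not_summable_min:
  fixes \<psi> :: "nat \<Rightarrow> real"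
  assumes ns: "\<not> summable \<psi>"
  shows "\<not> summable (\<lambda>q. min 1 (\<psi> (Suc q)))"
proof
  assume s: "summable (\<lambda>q. min 1 (\<psi> (Suc q)))"
  then have "(\<lambda>q. min 1 (\<psi> (Suc q))) \<longlonglongrightarrow> 0" by (rule summable_LIMSEQ_zero)
  then have ev: "eventually (\<lambda>q. min 1 (\<psi> (Suc q)) < 1) sequentially"
    by (rule order_tendstoD) simp
  have "eventually (\<lambda>q. min 1 (\<psi> (Suc q)) = \<psi> (Suc q)) sequentially"
    using ev by eventually_elim (auto simp: min_def)
  then have "summable (\<lambda>q. \<psi> (Suc q))" using s summable_cong by fastforce
  then have "summable \<psi>" using summable_iff_shift[of \<psi> 1] by simp
  with ns show False by simp
qed


lemma JJ_one: "JJ (\<lambda>z. 1) = 1"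
  unfolding JJ_def by (simp add: nn_integral_multc)

lemma JJ1:
  assumes "0 \<le> a" "a \<le> 1/2"
  shows "JJ (\<lambda>z. ee a (c * fst z - snd z)) = ennreal (2 * a)"
  unfolding JJ_def using G1[OF assms, of c] by simp

lemma JJ2:
  assumes "q \<noteq> r" "0 \<le> a" "a \<le> 1/2" "0 \<le> b" "b \<le> 1/2"
  shows "JJ (\<lambda>z. ee a (real (Suc q) * fst z - snd z) * ee b (real (Suc r) * fst z - snd z))
         = ennreal (2 * a) * ennreal (2 * b)"
proof (cases "q < r")
  case True
  then show ?thesis unfolding JJ_def using G2[of "Suc q" "Suc r" a b] assms by simp
next
  case False
  then have "r < q" using assms by simp
  then show ?thesis unfolding JJ_def using G2[of "Suc r" "Suc q" b a] assms
    by (simp add: mult.commute)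
qed

lemma emeasure_UU: "emeasure lborel UU = 1"
proof -
  have "emeasure (lborel \<Otimes>\<^sub>M lborel) ({0..1::real} \<times> {0..1::real}) = 1"
    by (subst lborel.emeasure_pair_measure_Times) auto
  then show ?thesis by (simp add: lborel_prod UU_def)
qed

lemma point_in_W:
  fixes \<psi> :: "nat \<Rightarrow> real" and x \<gamma> :: "real \<times> real"
  assumes i: "0 \<le> i" and j: "0 \<le> j" and pos: "\<And>n. n \<ge> 1 \<Longrightarrow> \<psi> n > 0"
    and g: "\<gamma> \<in> UU"
    and inf: "\<forall>m. \<exists>q\<ge>m. dist_int (real (Suc q) * fst x - fst \<gamma>) \<le> min (1/2) (\<psi> (Suc q) powr i)
                          \<and> dist_int (real (Suc q) * snd x - snd \<gamma>) \<le> min (1/2) (\<psi> (Suc q) powr j)"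
  shows "\<gamma> \<in> W_set x i j \<psi>"
proof -
  define Sq where "Sq = {q. dist_int (real (Suc q) * fst x - fst \<gamma>) \<le> min (1/2) (\<psi> (Suc q) powr i)
                          \<and> dist_int (real (Suc q) * snd x - snd \<gamma>) \<le> min (1/2) (\<psi> (Suc q) powr j)}"
  have infS: "infinite Sq" unfolding Sq_def infinite_nat_iff_unbounded_le using inf by auto
  define Z where "Z = {q :: int. q \<noteq> 0 \<and>
       max (wpow (of_int q * fst x - fst \<gamma>) i) (wpow (of_int q * snd x - snd \<gamma>) j)
         \<le> \<psi> (nat \<bar>q\<bar>)}"
  have sub: "(\<lambda>q. int (Suc q)) ` Sq \<subseteq> Z"
  proof
    fix z assume "z \<in> (\<lambda>q. int (Suc q)) ` Sq"
    then obtain q where q: "q \<in> Sq" and z: "z = int (Suc q)" by auto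
    have ps: "\<psi> (Suc q) > 0" using pos by simp
    have "wpow (real (Suc q) * fst x - fst \<gamma>) i \<le> \<psi> (Suc q)"
      using q i ps by (intro wpow_le) (auto simp: Sq_def)
    moreover have "wpow (real (Suc q) * snd x - snd \<gamma>) j \<le> \<psi> (Suc q)"
      using q j ps by (intro wpow_le) (auto simp: Sq_def)
    moreover have "nat (1 + int q) = Suc q" by arith
    ultimately show "z \<in> Z" unfolding Z_def z by simp
  qed
  have "inj (\<lambda>q. int (Suc q))" by (auto simp: inj_def)
  then have "infinite ((\<lambda>q. int (Suc q)) ` Sq)" using infS by (meson finite_imageD inj_on_subset subset_UNIV)
  then have "infinite Z" using sub finite_subset by blast
  then show ?thesis using g unfolding W_set_def Z_def UU_def by simp
qed

theorem theorem1p1: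
  fixes i j :: real and \<psi> :: "nat \<Rightarrow> real"
  assumes "i \<ge> 0" and "j \<ge> 0" and "i + j = 1"
    and "approx_fun \<psi>"
    and "\<not> summable \<psi>"
  shows "{x \<in> {0..1} \<times> {0..1}. irrational_vec x \<and> emeasure lebesgue (W_set x i j \<psi>) \<noteq> 1}
           \<in> null_sets lebesgue"
proof -
  have pos: "\<And>n. n \<ge> 1 \<Longrightarrow> \<psi> n > 0" using assms(4) by (simp add: approx_fun_def)
  define aa where "aa q = min (1/2) (\<psi> (Suc q) powr i)" for q
  define bb where "bb q = min (1/2) (\<psi> (Suc q) powr j)" for q
  have aa: "0 \<le> aa q" "aa q \<le> 1/2" for q unfolding aa_def by auto
  have bb: "0 \<le> bb q" "bb q \<le> 1/2" for q unfolding bb_def by auto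
  define AA where "AA q = {\<omega> :: (real \<times> real) \<times> (real \<times> real). \<omega> \<in> UU \<times> UU
      \<and> dist_int (real (Suc q) * fst (fst \<omega>) - fst (snd \<omega>)) \<le> aa q
      \<and> dist_int (real (Suc q) * snd (fst \<omega>) - snd (snd \<omega>)) \<le> bb q}" for q
  define w :: "(real \<times> real) \<times> (real \<times> real) \<Rightarrow> ennreal"
    where "w \<omega> = indicator UU (fst \<omega>) * indicator UU (snd \<omega>)" for \<omega>
  define MM where "MM = density lborel w"
  have wm[measurable]: "w \<in> borel_measurable borel" unfolding w_def by measurable
  have AAs[measurable]: "AA q \<in> sets borel" for q
  proof -
    have "AA q = {\<omega> \<in> space borel. indicator UU (fst \<omega>) * indicator UU (snd \<omega>) = (1::real)
      \<and> dist_int (real (Suc q) * fst (fst \<omega>) - fst (snd \<omega>)) \<le> aa q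
      \<and> dist_int (real (Suc q) * snd (fst \<omega>) - snd (snd \<omega>)) \<le> bb q}"
      unfolding AA_def by (auto simp: indicator_def)
    also have "\<dots> \<in> sets borel" by measurable
    finally show ?thesis .
  qed
  have sMM: "sets MM = sets borel" unfolding MM_def by simp
  have emMM: "emeasure MM S = (\<integral>\<^sup>+\<omega>. w \<omega> * indicator S \<omega> \<partial>lborel)" if "S \<in> sets borel" for S
    unfolding MM_def using that by (subst emeasure_density) auto
  have ee_ind: "(indicator {t. dist_int t \<le> a} t :: ennreal) = ee a t" for a t by (simp add: ee_def)
  have "emeasure MM (space MM) = JJ (\<lambda>z. 1) * JJ (\<lambda>z. 1)"
  proof -
    have "emeasure MM (space MM) = (\<integral>\<^sup>+\<omega>. indicator UU (fst \<omega>) * indicator UU (snd \<omega>) * ((\<lambda>z. 1) (fst (fst \<omega>), fst (snd \<omega>)) * (\<lambda>z. 1) (snd (fst \<omega>), snd (snd \<omega>))) \<partial>lborel)"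
      unfolding MM_def by (subst emeasure_density) (auto simp: w_def)
    also have "\<dots> = JJ (\<lambda>z. 1) * JJ (\<lambda>z. 1)" by (rule prod4) auto
    finally show ?thesis .
  qed
  then have "emeasure MM (space MM) = 1" by (simp add: JJ_one)
  then interpret MM: prob_space MM by (rule prob_spaceI)
  define p where "p q = (2 * aa q) * (2 * bb q)" for q
  have pAA: "MM.prob (AA q) = p q" for q
  proof -
    have "emeasure MM (AA q) = (\<integral>\<^sup>+\<omega>. indicator UU (fst \<omega>) * indicator UU (snd \<omega>) *
         ((\<lambda>z. ee (aa q) (real (Suc q) * fst z - snd z)) (fst (fst \<omega>), fst (snd \<omega>)) *
          (\<lambda>z. ee (bb q) (real (Suc q) * fst z - snd z)) (snd (fst \<omega>), snd (snd \<omega>))) \<partial>lborel)"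
      by (subst emMM) (auto intro!: nn_integral_cong simp: w_def AA_def indicator_def ee_def)
    also have "\<dots> = JJ (\<lambda>z. ee (aa q) (real (Suc q) * fst z - snd z)) * JJ (\<lambda>z. ee (bb q) (real (Suc q) * fst z - snd z))"
      by (rule prod4) measurable
    also have "\<dots> = ennreal (2 * aa q) * ennreal (2 * bb q)" using aa bb by (simp add: JJ1)
    also have "\<dots> = ennreal (p q)" unfolding p_def using aa bb by (subst ennreal_mult) auto
    finally show ?thesis using aa bb by (simp add: measure_def p_def)
  qed
  have pAA2: "MM.prob (AA q \<inter> AA r) = p q * p r" if qr: "q \<noteq> r" for q r
  proof -
    have "emeasure MM (AA q \<inter> AA r) = (\<integral>\<^sup>+\<omega>. indicator UU (fst \<omega>) * indicator UU (snd \<omega>) *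
         ((\<lambda>z. ee (aa q) (real (Suc q) * fst z - snd z) * ee (aa r) (real (Suc r) * fst z - snd z)) (fst (fst \<omega>), fst (snd \<omega>)) *
          (\<lambda>z. ee (bb q) (real (Suc q) * fst z - snd z) * ee (bb r) (real (Suc r) * fst z - snd z)) (snd (fst \<omega>), snd (snd \<omega>))) \<partial>lborel)"
      by (subst emMM) (auto intro!: nn_integral_cong simp: w_def AA_def indicator_def ee_def)
    also have "\<dots> = JJ (\<lambda>z. ee (aa q) (real (Suc q) * fst z - snd z) * ee (aa r) (real (Suc r) * fst z - snd z))
                  * JJ (\<lambda>z. ee (bb q) (real (Suc q) * fst z - snd z) * ee (bb r) (real (Suc r) * fst z - snd z))"
      by (rule prod4) measurable
    also have "\<dots> = (ennreal (2 * aa q) * ennreal (2 * aa r)) * (ennreal (2 * bb q) * ennreal (2 * bb r))"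
      by (simp only: JJ2[OF qr aa(1,2) aa(1,2)] JJ2[OF qr bb(1,2) bb(1,2)])
    also have "\<dots> = ennreal ((2 * aa q) * (2 * aa r) * ((2 * bb q) * (2 * bb r)))"
    proof -
      have e1: "ennreal (2 * aa q) * ennreal (2 * aa r) = ennreal ((2 * aa q) * (2 * aa r))"
        by (rule ennreal_mult[symmetric]) (simp_all add: aa)
      have e2: "ennreal (2 * bb q) * ennreal (2 * bb r) = ennreal ((2 * bb q) * (2 * bb r))"
        by (rule ennreal_mult[symmetric]) (simp_all add: bb)
      have e3: "ennreal ((2 * aa q) * (2 * aa r)) * ennreal ((2 * bb q) * (2 * bb r)) = ennreal ((2 * aa q) * (2 * aa r) * ((2 * bb q) * (2 * bb r)))"
        by (rule ennreal_mult[symmetric]) (simp_all add: aa bb)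
      show ?thesis by (simp only: e1 e2 e3)
    qed
    also have "\<dots> = ennreal (p q * p r)"
      unfolding p_def by (simp add: mult_ac)
    finally show ?thesis using aa bb by (simp add: measure_def p_def)
  qed
  have ns: "\<not> summable p"
  proof
    assume s: "summable p"
    have "summable (\<lambda>q. min 1 (\<psi> (Suc q)))"
    proof (rule summable_comparison_test[OF _ s])
      show "\<exists>N. \<forall>n\<ge>N. norm (min 1 (\<psi> (Suc n))) \<le> p n"
      proof (intro exI allI impI)
        fix n :: nat
        have "\<psi> (Suc n) > 0" using pos by simp
        then show "norm (min 1 (\<psi> (Suc n))) \<le> p n"
          using four_ab[of "\<psi> (Suc n)" i j] assms(1-3)
          by (simp add: p_def aa_def bb_def mult_ac)
      qed
    qed
    with not_summable_min[OF assms(5)] show False by simp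
  qed
  have ev: "AA q \<in> MM.events" for q using sMM by simp
  have all1: "MM.prob (\<Union>q\<in>{m..}. AA q) = 1" for m
    by (rule MM.BC2[OF ev pAA pAA2 ns])
  have "AE \<omega> in MM. \<forall>m. \<omega> \<in> (\<Union>q\<in>{m..}. AA q)"
  proof (subst AE_all_countable, intro allI)
    fix m show "AE \<omega> in MM. \<omega> \<in> (\<Union>q\<in>{m..}. AA q)" by (rule MM.AE_prob_1[OF all1])
  qed
  then have "AE \<omega> in lborel. 0 < w \<omega> \<longrightarrow> (\<forall>m. \<omega> \<in> (\<Union>q\<in>{m..}. AA q))"
    unfolding MM_def by (subst (asm) AE_density) auto
  then have "AE \<omega> in lborel \<Otimes>\<^sub>M lborel. 0 < w \<omega> \<longrightarrow> (\<forall>m. \<omega> \<in> (\<Union>q\<in>{m..}. AA q))"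
    by (subst lborel_prod)
  then have AEx: "AE x in lborel. AE \<gamma> in lborel. 0 < w (x, \<gamma>) \<longrightarrow> (\<forall>m. (x, \<gamma>) \<in> (\<Union>q\<in>{m..}. AA q))"
    by (rule lborel_pair.AE_pair)
  have good: "emeasure lebesgue (W_set x i j \<psi>) = 1"
    if x: "x \<in> UU" and ae: "AE \<gamma> in lborel. 0 < w (x, \<gamma>) \<longrightarrow> (\<forall>m. (x, \<gamma>) \<in> (\<Union>q\<in>{m..}. AA q))" for x
  proof -
    from ae obtain N where N: "{\<gamma> \<in> space lborel. \<not> (0 < w (x, \<gamma>) \<longrightarrow> (\<forall>m. (x, \<gamma>) \<in> (\<Union>q\<in>{m..}. AA q)))} \<subseteq> N"
      and N0: "emeasure lborel N = 0" and Ns: "N \<in> sets lborel" by (rule AE_E)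
    have Nn: "N \<in> null_sets lborel" using N0 Ns by (simp add: null_setsI)
    have sub1: "UU - W_set x i j \<psi> \<subseteq> N"
    proof
      fix \<gamma> assume g: "\<gamma> \<in> UU - W_set x i j \<psi>"
      show "\<gamma> \<in> N"
      proof (rule ccontr)
        assume "\<gamma> \<notin> N"
        then have "0 < w (x, \<gamma>) \<longrightarrow> (\<forall>m. (x, \<gamma>) \<in> (\<Union>q\<in>{m..}. AA q))" using N by auto
        moreover have "0 < w (x, \<gamma>)" using x g by (simp add: w_def)
        ultimately have "\<forall>m. \<exists>q\<ge>m. (x, \<gamma>) \<in> AA q" by auto
        then have "\<gamma> \<in> W_set x i j \<psi>"
          using g by (intro point_in_W[OF assms(1,2) pos]) (auto simp: AA_def aa_def bb_def)
        with g show False by simp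
      qed
    qed
    have D: "UU - W_set x i j \<psi> \<in> null_sets lebesgue"
      by (rule null_sets_completion_subset[OF sub1 null_sets_completionI[OF Nn]])
    have WU: "W_set x i j \<psi> = UU - (UU - W_set x i j \<psi>)"
      unfolding W_set_def UU_def by auto
    have "emeasure lebesgue (UU - (UU - W_set x i j \<psi>)) = emeasure lebesgue UU"
      by (rule emeasure_Diff_null_set[OF D]) (simp add: UU_sets)
    also have "\<dots> = 1" using emeasure_UU by (simp add: UU_sets)
    finally show ?thesis using WU by simp
  qed
  from AEx obtain N where N: "{x \<in> space lborel. \<not> (AE \<gamma> in lborel. 0 < w (x, \<gamma>) \<longrightarrow> (\<forall>m. (x, \<gamma>) \<in> (\<Union>q\<in>{m..}. AA q)))} \<subseteq> N"
    and N0: "emeasure lborel N = 0" and Ns: "N \<in> sets lborel" by (rule AE_E)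
  have Nn: "N \<in> null_sets lborel" using N0 Ns by (simp add: null_setsI)
  have "{x \<in> {0..1} \<times> {0..1}. irrational_vec x \<and> emeasure lebesgue (W_set x i j \<psi>) \<noteq> 1} \<subseteq> N"
    using N good unfolding UU_def by auto
  then show ?thesis
    by (rule null_sets_completion_subset[OF _ null_sets_completionI[OF Nn]])
qed

end
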